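(* Consider the tensor network template $(G,c)$ with the following data. - Three inputs $s_1,s_2,s_3$ and two outputs $t_1,t_2$. - Three vertices $v_1,v_2,v_3$. - Edges and capacities: - $s_2$–$v_1$, capacity $2$; - $v_1$–$v_2$, capacity $2$; - $v_1$–$v_3$, capacity $2$; - $s_1$–$v_2$, capacity $2$; - $v_2$–$t_1$, capacity $3$; - $s_3$–$v_3$, capacity $2$; - $v_3$–$t_2$, capacity $3$. Then $\mathrm{QMC}(G,c)=8$ and $\mathrm{QMF}(G,c)=7$.
   Context: A tensor network template $(G,c)$ consists of a finite undirected graph $G$ with edge set $E$ whose vertex set is partitioned as $S\sqcup T\sqcup V$. Every element of $S$ (inputs) and every element of $T$ (outputs) is an open end of degree $1$; the elements of $V$ are called vertices. For $u\in S\sqcup T$, $e(u)$ denotes the edge incident to $u$. A capacity function $c:E\to\mathbb{Z}_{>0}$ is given, and to each edge $e$ one associates $\mathbb{C}^{c_e}$ with a fixed basis. At each vertex $v$ of degree $d_v$ an ordering $e(v,1),\dots,e(v,d_v)$ of the incident edge-ends is fixed. A tensor assignment $\mathcal T=(\mathcal T_v)_{v\in V}$ chooses $\mathcal T_v\in\bigotimes_{i=1}^{d_v}\mathbb{C}^{c_{e(v,i)}}$ for each $v$. Let $V_S=\bigotimes_{u\in S}\mathbb{C}^{c_{e(u)}}$ and $V_T=\bigotimes_{u\in T}\mathbb{C}^{c_{e(u)}}$. Contracting the network along all edges gives $\beta(G,c;\mathcal T)\in\mathrm{Hom}(V_S,V_T)$, whose matrix entries are $\langle I_T|\beta|I_S\rangle=\sum_W\prod_{v\in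 V}(\mathcal T_v)_{W|_v}$. Here $W$ ranges over all assignments of basis indices to all edges that agree with $I_S$ on the input edges and with $I_T$ on the output edges, and $W|_v$ is the tuple of indices on $e(v,1),\dots,e(v,d_v)$. The quantum max-flow is $\mathrm{QMF}(G,c)=\max_{\mathcal T}\operatorname{rank}\beta(G,c;\mathcal T)$. An edge cut set is a set $C\subseteq E$ for which there is a partition $S\sqcup T\sqcup V=\bar S\sqcup\bar T$ with $S\subseteq\bar S$, $T\subseteq\bar T$, and $C$ equal to the set of edges having one endpoint in $\bar S$ and the other in $\bar T$. The quantum min-cut is $\mathrm{QMC}(G,c)=\min_C\prod_{e\in C}c_e$, the minimum taken over all edge cut sets $C$. *)

theory Defs
  imports "HOL-Library.FuncSet" "Jordan_Normal_Form.DL_Rank"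
begin

text \<open>A template is given by: inputs S, outputs T, vertices V (pairwise disjoint node sets),
a finite edge set E with endpoint map ends (an undirected edge e joins fst (ends e) and
snd (ends e)), and capacities c.\<close>

definition incident :: "'e set \<Rightarrow> ('e \<Rightarrow> 'n \<times> 'n) \<Rightarrow> 'n \<Rightarrow> 'e set" where
  "incident E ends u = {e \<in> E. fst (ends e) = u \<or> snd (ends e) = u}"

definition end_edges :: "'e set \<Rightarrow> ('e \<Rightarrow> 'n \<times> 'n) \<Rightarrow> 'n set \<Rightarrow> 'e set" where
  "end_edges E ends U = (\<Union>u\<in>U. incident E ends u)"

definition assignments :: "'e set \<Rightarrow> ('e \<Rightarrow> nat) \<Rightarrow> ('e \<Rightarrow> nat) set" where
  "assignments A c = PiE A (\<lambda>e. {..<c e})"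

text \<open>Matrix entry of the contraction beta(G,c;Tn) at output index I_T and input index I_S.
  A tensor at vertex v is a function of the indices on the edges incident to v
  (coordinates of the tensor in the fixed product basis).\<close>
definition contraction ::
  "'n set \<Rightarrow> 'n set \<Rightarrow> 'n set \<Rightarrow> 'e set \<Rightarrow> ('e \<Rightarrow> 'n \<times> 'n) \<Rightarrow> ('e \<Rightarrow> nat)
   \<Rightarrow> ('n \<Rightarrow> ('e \<Rightarrow> nat) \<Rightarrow> complex) \<Rightarrow> ('e \<Rightarrow> nat) \<Rightarrow> ('e \<Rightarrow> nat) \<Rightarrow> complex" where
  "contraction S T V E ends c Tn IT IS =
     (\<Sum>W \<in> {W \<in> assignments E c. restrict W (end_edges E ends S) = IS
                                  \<and> restrict W (end_edges E ends T) = IT}.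
        \<Prod>v\<in>V. Tn v (restrict W (incident E ends v)))"

definition enum_set :: "'a set \<Rightarrow> 'a list" where
  "enum_set A = (SOME xs. set xs = A \<and> distinct xs)"

definition set_mat_rank :: "'r set \<Rightarrow> 'c set \<Rightarrow> ('r \<Rightarrow> 'c \<Rightarrow> complex) \<Rightarrow> nat" where
  "set_mat_rank R C M =
     (let rs = enum_set R; cs = enum_set C
      in vec_space.rank (length rs) (mat (length rs) (length cs) (\<lambda>(i, j). M (rs ! i) (cs ! j))))"

definition QMF ::
  "'n set \<Rightarrow> 'n set \<Rightarrow> 'n set \<Rightarrow> 'e set \<Rightarrow> ('e \<Rightarrow> 'n \<times> 'n) \<Rightarrow> ('e \<Rightarrow> nat) \<Rightarrow> nat" where
  "QMF S T V E ends c =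
     Max {set_mat_rank (assignments (end_edges E ends T) c) (assignments (end_edges E ends S) c)
            (contraction S T V E ends c Tn) | Tn. True}"

definition edge_cut_sets ::
  "'n set \<Rightarrow> 'n set \<Rightarrow> 'n set \<Rightarrow> 'e set \<Rightarrow> ('e \<Rightarrow> 'n \<times> 'n) \<Rightarrow> 'e set set" where
  "edge_cut_sets S T V E ends =
     {C. \<exists>Sb Tb. Sb \<inter> Tb = {} \<and> Sb \<union> Tb = S \<union> T \<union> V \<and> S \<subseteq> Sb \<and> T \<subseteq> Tb \<and>
          C = {e \<in> E. (fst (ends e) \<in> Sb \<and> snd (ends e) \<in> Tb) \<or>
                       (fst (ends e) \<in> Tb \<and> snd (ends e) \<in> Sb)}}"

definition QMC ::
  "'n set \<Rightarrow> 'n set \<Rightarrow> 'n set \<Rightarrow> 'e set \<Rightarrow> ('e \<Rightarrow> 'n \<times> 'n) \<Rightarrow> ('e \<Rightarrow> nat) \<Rightarrow> nat" where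
  "QMC S T V E ends c = Min {\<Prod>e\<in>C. c e | C. C \<in> edge_cut_sets S T V E ends}"

datatype node = s1 | s2 | s3 | t1 | t2 | v1 | v2 | v3
datatype edge = e_s2v1 | e_v1v2 | e_v1v3 | e_s1v2 | e_v2t1 | e_s3v3 | e_v3t2

fun ex_ends :: "edge \<Rightarrow> node \<times> node" where
  "ex_ends e_s2v1 = (s2, v1)"
| "ex_ends e_v1v2 = (v1, v2)"
| "ex_ends e_v1v3 = (v1, v3)"
| "ex_ends e_s1v2 = (s1, v2)"
| "ex_ends e_v2t1 = (v2, t1)"
| "ex_ends e_s3v3 = (s3, v3)"
| "ex_ends e_v3t2 = (v3, t2)"

fun ex_cap :: "edge \<Rightarrow> nat" where
  "ex_cap e_s2v1 = 2"
| "ex_cap e_v1v2 = 2"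
| "ex_cap e_v1v3 = 2"
| "ex_cap e_s1v2 = 2"
| "ex_cap e_v2t1 = 3"
| "ex_cap e_s3v3 = 2"
| "ex_cap e_v3t2 = 3"

definition ex_S :: "node set" where "ex_S = {s1, s2, s3}"
definition ex_T :: "node set" where "ex_T = {t1, t2}"
definition ex_V :: "node set" where "ex_V = {v1, v2, v3}"
definition ex_E :: "edge set" where "ex_E = UNIV"

end

theory Submission
  imports Defs
begin


lemma sum2: "(\<Sum>i<(2::nat). f i) = f 0 + f 1"
  by (simp add: numeral_2_eq_2)
lemma sum3: "(\<Sum>i<(3::nat). f i) = f 0 + f 1 + f 2"
  by (simp add: eval_nat_numeral)
lemma all2: "(\<forall>a<(2::nat). P a) \<longleftrightarrow> P 0 \<and> P 1"
  by (auto simp: numeral_2_eq_2 less_Suc_eq)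
lemma ex2: "(\<exists>a<(2::nat). P a) \<longleftrightarrow> P 0 \<or> P 1"
  by (auto simp: numeral_2_eq_2 less_Suc_eq)
lemma all3: "(\<forall>a<(3::nat). P a) \<longleftrightarrow> P 0 \<and> P 1 \<and> P 2"
  by (auto simp: eval_nat_numeral less_Suc_eq)

type_synonym t3 = "nat \<Rightarrow> nat \<Rightarrow> nat \<Rightarrow> complex"

definition betaX :: "t3 \<Rightarrow> t3 \<Rightarrow> t3 \<Rightarrow> t3 \<Rightarrow> nat \<Rightarrow> nat \<Rightarrow> complex" where
  "betaX T A B X u1 u2 = (\<Sum>i<2. \<Sum>j<2. \<Sum>k<2. (\<Sum>a<2. \<Sum>b<2. T j a b * A a i u1 * B b k u2) * X i j k)"

definition kerex :: "t3 \<Rightarrow> t3 \<Rightarrow> t3 \<Rightarrow> bool" where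
  "kerex T A B \<longleftrightarrow> (\<exists>X. (\<exists>i<2. \<exists>j<2. \<exists>k<2. X i j k \<noteq> 0) \<and> (\<forall>u1<3. \<forall>u2<3. betaX T A B X u1 u2 = 0))"

definition ap :: "t3 \<Rightarrow> (nat \<Rightarrow> complex) \<Rightarrow> (nat \<Rightarrow> complex) \<Rightarrow> nat \<Rightarrow> complex" where
  "ap A al p t = al 0 * (A 0 0 t * p 0 + A 0 1 t * p 1) + al 1 * (A 1 0 t * p 0 + A 1 1 t * p 1)"

definition TY :: "t3 \<Rightarrow> (nat \<Rightarrow> complex) \<Rightarrow> nat \<Rightarrow> nat \<Rightarrow> complex" where
  "TY T y a b = y 0 * T 0 a b + y 1 * T 1 a b"

definition nz :: "(nat \<Rightarrow> complex) \<Rightarrow> bool" where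
  "nz p \<longleftrightarrow> p 0 \<noteq> 0 \<or> p 1 \<noteq> 0"

definition vec2 :: "complex \<Rightarrow> complex \<Rightarrow> nat \<Rightarrow> complex" where
  "vec2 x y = (\<lambda>i. if i = 0 then x else y)"

lemma vec2_simps[simp]: "vec2 x y 0 = x" "vec2 x y (Suc 0) = y" "vec2 x y 1 = y"
  by (simp_all add: vec2_def)

definition det2 :: "(nat \<Rightarrow> nat \<Rightarrow> complex) \<Rightarrow> complex" where
  "det2 M = M 0 0 * M 1 1 - M 0 1 * M 1 0"

lemma betaX_expand:
  "betaX T A B (\<lambda>i j k. p i * y j * r k) u1 u2 =
    (\<Sum>a<2. \<Sum>b<2. TY T y a b * (A a 0 u1 * p 0 + A a 1 u1 * p 1) * (B b 0 u2 * r 0 + B b 1 u2 * r 1))"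
  unfolding betaX_def TY_def sum2 by (simp add: algebra_simps)

lemma E2:
  assumes "\<forall>a<2. \<forall>b<2. TY T y a b = al a * g b + h a * ga b"
  shows "betaX T A B (\<lambda>i j k. p i * y j * r k) u1 u2 = ap A al p u1 * ap B g r u2 + ap A h p u1 * ap B ga r u2"
  using assms unfolding betaX_expand all2 sum2 ap_def by (simp add: algebra_simps)

lemma betaX_add: "betaX T A B (\<lambda>i j k. X i j k + Y i j k) u1 u2 = betaX T A B X u1 u2 + betaX T A B Y u1 u2"
  unfolding betaX_def by (simp add: distrib_left sum.distrib)

lemma betaX_diff: "betaX T A B (\<lambda>i j k. X i j k - Y i j k) u1 u2 = betaX T A B X u1 u2 - betaX T A B Y u1 u2"
  unfolding betaX_def by (simp add: right_diff_distrib sum_subtractf)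

lemma ker34:
  fixes F G :: "nat \<Rightarrow> nat \<Rightarrow> complex"
  shows "\<exists>p q. (nz p \<or> nz q) \<and> (\<forall>t<3. F t 0 * p 0 + F t 1 * p 1 + G t 0 * q 0 + G t 1 * q 1 = 0)"
proof -
  define f where "f = (\<lambda>t j. if j = 0 then F t 0 else if j = 1 then F t 1 else if j = (2::nat) then G t 0 else G t 1)"
  define M :: "complex mat" where "M = mat 4 4 (\<lambda>(i,j). f (min i 2) j)"
  have Mc: "M \<in> carrier_mat 4 4" unfolding M_def by simp
  have "row M 2 = row M 3"
    by (rule eq_vecI) (auto simp: M_def)
  then have "det M = 0" by (intro det_identical_rows[OF Mc, of 2 3]) auto
  then obtain v where v: "v \<in> carrier_vec 4" "v \<noteq> 0\<^sub>v 4" "M *\<^sub>v v = 0\<^sub>v 4"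
    using det_0_iff_vec_prod_zero_field[OF Mc] by blast
  define p where "p = vec2 (v$0) (v$1)"
  define q where "q = vec2 (v$2) (v$3)"
  have dv: "dim_vec v = 4" using v(1) by auto
  have "\<exists>i<4. v $ i \<noteq> 0"
  proof (rule ccontr)
    assume "\<not> ?thesis"
    then have "v = 0\<^sub>v 4" by (intro eq_vecI) (auto simp: dv)
    then show False using v(2) by simp
  qed
  then have nzpq: "nz p \<or> nz q"
    unfolding nz_def p_def q_def by (auto simp: eval_nat_numeral less_Suc_eq)
  have "\<forall>t<3. F t 0 * p 0 + F t 1 * p 1 + G t 0 * q 0 + G t 1 * q 1 = 0"
  proof (intro allI impI)
    fix t :: nat assume t: "t < 3"
    have "(M *\<^sub>v v) $ t = 0" using v(3) t by simp
    then have "(\<Sum>j\<in>{0..<4}. f t j * v $ j) = 0"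
      using t by (simp add: M_def scalar_prod_def dv row_def)
    then show "F t 0 * p 0 + F t 1 * p 1 + G t 0 * q 0 + G t 1 * q 1 = 0"
      by (simp add: p_def q_def f_def eval_nat_numeral atLeast0_lessThan_Suc add_ac)
  qed
  then show ?thesis using nzpq by blast
qed

lemma indep2:
  fixes c d :: complex
  assumes "c * u 0 + d * w 0 = 0" "c * u 1 + d * w 1 = 0" "u 0 * w 1 - u 1 * w 0 \<noteq> 0"
  shows "c = 0"
proof -
  have "c * (u 0 * w 1 - u 1 * w 0) = w 1 * (c * u 0 + d * w 0) - w 0 * (c * u 1 + d * w 1)"
    by (simp add: algebra_simps)
  then have "c * (u 0 * w 1 - u 1 * w 0) = 0" using assms by simp
  then show ?thesis using assms(3) by simp
qed

lemma kerap:
  "\<exists>p q. (nz p \<or> nz q) \<and> (\<forall>t<3. ap A al p t + ap A al2 q t = 0)"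
proof -
  obtain p q where "nz p \<or> nz q" and h:
    "\<forall>t<3. (al 0 * A 0 0 t + al 1 * A 1 0 t) * p 0 + (al 0 * A 0 1 t + al 1 * A 1 1 t) * p 1
         + (al2 0 * A 0 0 t + al2 1 * A 1 0 t) * q 0 + (al2 0 * A 0 1 t + al2 1 * A 1 1 t) * q 1 = 0"
    using ker34[of "\<lambda>t i. al 0 * A 0 i t + al 1 * A 1 i t" "\<lambda>t i. al2 0 * A 0 i t + al2 1 * A 1 i t"]
    by blast
  moreover have "\<forall>t<3. ap A al p t + ap A al2 q t = 0"
  proof (intro allI impI)
    fix t :: nat assume "t < 3"
    then have "(al 0 * A 0 0 t + al 1 * A 1 0 t) * p 0 + (al 0 * A 0 1 t + al 1 * A 1 1 t) * p 1
         + (al2 0 * A 0 0 t + al2 1 * A 1 0 t) * q 0 + (al2 0 * A 0 1 t + al2 1 * A 1 1 t) * q 1 = 0"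
      using h by blast
    then show "ap A al p t + ap A al2 q t = 0" unfolding ap_def by (simp add: algebra_simps)
  qed
  ultimately show ?thesis by blast
qed

lemma nzE: "nz p \<Longrightarrow> \<exists>i<2. p i \<noteq> 0"
  by (auto simp: nz_def ex2)

lemma ap_zero: "\<not> nz p \<Longrightarrow> ap A al p t = 0"
  by (simp add: nz_def ap_def)

lemma ap_zero_al: "ap A (\<lambda>_. 0) p t = 0"
  by (simp add: ap_def)

lemma E1:
  assumes "\<forall>a<2. \<forall>b<2. TY T y a b = al a * ga b"
  shows "betaX T A B (\<lambda>i j k. p i * y j * r k) u1 u2 = ap A al p u1 * ap B ga r u2"
  using E2[where g=ga and h="\<lambda>_. 0"] assms by (simp add: ap_zero_al)

lemma ex3I: "i<2 \<Longrightarrow> j<2 \<Longrightarrow> k<2 \<Longrightarrow> X i j k \<noteq> 0 \<Longrightarrow> \<exists>i<2. \<exists>j<2. \<exists>k<2. X i j k \<noteq> 0"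
  by blast

lemma kerD:
  assumes y: "nz y" and h: "\<forall>a<2. \<forall>b<2. TY T y a b = 0"
  shows "kerex T A B"
proof -
  have "\<forall>a<2. \<forall>b<2. TY T y a b = (\<lambda>_. 0) a * (\<lambda>_. 0) b" using h by simp
  note e = E1[OF this]
  obtain j where j: "j < 2" "y j \<noteq> 0" using nzE[OF y] by blast
  show ?thesis unfolding kerex_def
  proof (intro exI[of _ "\<lambda>i j k. vec2 1 0 i * y j * vec2 1 0 k"] conjI)
    show "\<exists>i<2. \<exists>j<2. \<exists>k<2. vec2 1 0 i * y j * vec2 1 0 k \<noteq> 0"
      using j by (intro ex3I[of 0 j 0]) auto
    show "\<forall>u1<3. \<forall>u2<3. betaX T A B (\<lambda>i j k. vec2 1 0 i * y j * vec2 1 0 k) u1 u2 = 0"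
      using e by (simp add: ap_zero_al)
  qed
qed

lemma kerG:
  assumes dy: "y1 0 * y2 1 - y1 1 * y2 0 \<noteq> 0"
  and h1: "\<forall>a<2. \<forall>b<2. TY T y1 a b = al a * ga b"
  and h2: "\<forall>a<2. \<forall>b<2. TY T y2 a b = al2 a * ga2 b"
  shows "kerex T A B"
proof -
  note e1 = E1[OF h1] and e2 = E1[OF h2]
  obtain p q where pq: "nz p \<or> nz q" "\<forall>t<3. ap A al p t + ap A al2 q t = 0" using kerap by blast
  obtain r s where rs: "nz r \<or> nz s" "\<forall>t<3. ap B ga r t + ap B ga2 s t = 0" using kerap by blast
  have "nz y2" using dy by (auto simp: nz_def)
  then obtain j where j: "j < 2" "y2 j \<noteq> 0" using nzE by blast
  show ?thesis
  proof (cases "nz p")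
    case False
    then have q: "nz q" and hq: "\<forall>t<3. ap A al2 q t = 0" using pq by (auto simp: ap_zero)
    obtain i where i: "i < 2" "q i \<noteq> 0" using nzE[OF q] by blast
    show ?thesis unfolding kerex_def
    proof (intro exI[of _ "\<lambda>i j k. q i * y2 j * vec2 1 0 k"] conjI)
      show "\<exists>i<2. \<exists>j<2. \<exists>k<2. q i * y2 j * vec2 1 0 k \<noteq> 0"
        using i j by (intro ex3I[of i j 0]) auto
      show "\<forall>u1<3. \<forall>u2<3. betaX T A B (\<lambda>i j k. q i * y2 j * vec2 1 0 k) u1 u2 = 0"
        using e2 hq by simp
    qed
  next
    case p: True
    show ?thesis
    proof (cases "nz r")
      case False
      then have s: "nz s" and hs: "\<forall>t<3. ap B ga2 s t = 0" using rs by (auto simp: ap_zero)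
      obtain k where k: "k < 2" "s k \<noteq> 0" using nzE[OF s] by blast
      show ?thesis unfolding kerex_def
      proof (intro exI[of _ "\<lambda>i j k. vec2 1 0 i * y2 j * s k"] conjI)
        show "\<exists>i<2. \<exists>j<2. \<exists>k<2. vec2 1 0 i * y2 j * s k \<noteq> 0"
          using k j by (intro ex3I[of 0 j k]) auto
        show "\<forall>u1<3. \<forall>u2<3. betaX T A B (\<lambda>i j k. vec2 1 0 i * y2 j * s k) u1 u2 = 0"
          using e2 hs by simp
      qed
    next
      case r: True
      obtain i where i: "i < 2" "p i \<noteq> 0" using nzE[OF p] by blast
      obtain k where k: "k < 2" "r k \<noteq> 0" using nzE[OF r] by blast
      let ?X = "\<lambda>i j k. p i * y1 j * r k - q i * y2 j * s k"
      show ?thesis unfolding kerex_def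
      proof (intro exI[of _ ?X] conjI)
        show "\<exists>i<2. \<exists>j<2. \<exists>k<2. ?X i j k \<noteq> 0"
        proof (rule ccontr)
          assume "\<not> ?thesis"
          then have "?X i 0 k = 0" "?X i 1 k = 0" using i k by auto
          then have "(p i * r k) * y1 0 + (- (q i * s k)) * y2 0 = 0"
                    "(p i * r k) * y1 1 + (- (q i * s k)) * y2 1 = 0" by (simp_all add: algebra_simps)
          from indep2[OF this dy] i k show False by simp
        qed
        show "\<forall>u1<3. \<forall>u2<3. betaX T A B ?X u1 u2 = 0"
        proof (intro allI impI)
          fix u1 u2 :: nat assume u: "u1 < 3" "u2 < 3"
          have a: "ap A al p u1 = - ap A al2 q u1" using pq(2) u by (simp add: eq_neg_iff_add_eq_0)
          have b: "ap B ga r u2 = - ap B ga2 s u2" using rs(2) u by (simp add: eq_neg_iff_add_eq_0)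
          show "betaX T A B ?X u1 u2 = 0"
            by (simp add: betaX_diff e1 e2 a b)
        qed
      qed
    qed
  qed
qed

lemma kerN:
  assumes dy: "y1 0 * y2 1 - y1 1 * y2 0 \<noteq> 0"
  and h1: "\<forall>a<2. \<forall>b<2. TY T y1 a b = al a * ga b"
  and h2: "\<forall>a<2. \<forall>b<2. TY T y2 a b = al a * g b + h a * ga b"
  shows "kerex T A B"
proof -
  note e1 = E1[OF h1] and e2 = E2[OF h2]
  obtain p q where pq: "nz p \<or> nz q" "\<forall>t<3. ap A al p t + ap A h q t = 0" using kerap by blast
  obtain r s where rs: "nz r \<or> nz s" "\<forall>t<3. ap B g r t + ap B ga s t = 0" using kerap by blast
  have "nz y1" using dy by (auto simp: nz_def)
  then obtain j where j: "j < 2" "y1 j \<noteq> 0" using nzE by blast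
  show ?thesis
  proof (cases "nz q")
    case False
    then have p: "nz p" and hp: "\<forall>t<3. ap A al p t = 0" using pq by (auto simp: ap_zero)
    obtain i where i: "i < 2" "p i \<noteq> 0" using nzE[OF p] by blast
    show ?thesis unfolding kerex_def
    proof (intro exI[of _ "\<lambda>i j k. p i * y1 j * vec2 1 0 k"] conjI)
      show "\<exists>i<2. \<exists>j<2. \<exists>k<2. p i * y1 j * vec2 1 0 k \<noteq> 0"
        using i j by (intro ex3I[of i j 0]) auto
      show "\<forall>u1<3. \<forall>u2<3. betaX T A B (\<lambda>i j k. p i * y1 j * vec2 1 0 k) u1 u2 = 0"
        using e1 hp by simp
    qed
  next
    case q: True
    show ?thesis
    proof (cases "nz r")
      case False
      then have s: "nz s" and hs: "\<forall>t<3. ap B ga s t = 0" using rs by (auto simp: ap_zero)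
      obtain k where k: "k < 2" "s k \<noteq> 0" using nzE[OF s] by blast
      show ?thesis unfolding kerex_def
      proof (intro exI[of _ "\<lambda>i j k. vec2 1 0 i * y1 j * s k"] conjI)
        show "\<exists>i<2. \<exists>j<2. \<exists>k<2. vec2 1 0 i * y1 j * s k \<noteq> 0"
          using k j by (intro ex3I[of 0 j k]) auto
        show "\<forall>u1<3. \<forall>u2<3. betaX T A B (\<lambda>i j k. vec2 1 0 i * y1 j * s k) u1 u2 = 0"
          using e1 hs by simp
      qed
    next
      case r: True
      obtain i where i: "i < 2" "q i \<noteq> 0" using nzE[OF q] by blast
      obtain k where k: "k < 2" "r k \<noteq> 0" using nzE[OF r] by blast
      let ?X = "\<lambda>i j k. q i * y2 j * r k + (q i * y1 j * s k + p i * y1 j * r k)"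
      show ?thesis unfolding kerex_def
      proof (intro exI[of _ ?X] conjI)
        show "\<exists>i<2. \<exists>j<2. \<exists>k<2. ?X i j k \<noteq> 0"
        proof (rule ccontr)
          assume "\<not> ?thesis"
          then have "?X i 0 k = 0" "?X i 1 k = 0" using i k by auto
          then have "(q i * r k) * y2 0 + (q i * s k + p i * r k) * y1 0 = 0"
                    "(q i * r k) * y2 1 + (q i * s k + p i * r k) * y1 1 = 0" by (simp_all add: algebra_simps)
          moreover have "y2 0 * y1 1 - y2 1 * y1 0 \<noteq> 0" using dy by (simp add: algebra_simps)
          ultimately have "q i * r k = 0" using indep2 by blast
          then show False using i k by simp
        qed
        show "\<forall>u1<3. \<forall>u2<3. betaX T A B ?X u1 u2 = 0"
        proof (intro allI impI)
          fix u1 u2 :: nat assume u: "u1 < 3" "u2 < 3"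
          have a: "ap A h q u1 = - ap A al p u1" using pq(2) u by (simp add: eq_neg_iff_add_eq_0 add.commute)
          have b: "ap B g r u2 = - ap B ga s u2" using rs(2) u by (simp add: eq_neg_iff_add_eq_0)
          show "betaX T A B ?X u1 u2 = 0"
            unfolding betaX_add e1 e2 a b by (simp add: algebra_simps)
        qed
      qed
    qed
  qed
qed

lemma quad_root:
  fixes a b c :: complex
  assumes "a \<noteq> 0"
  shows "\<exists>t. a * t^2 + b * t + c = 0"
proof -
  define d where "d = csqrt (b^2 - 4*a*c)"
  have d2: "d^2 = b^2 - 4*a*c" unfolding d_def by simp
  define t where "t = (d - b) / (2*a)"
  have "a * t^2 + b * t + c = (d^2 - b^2 + 4*a*c) / (4*a)"
    using assms unfolding t_def by (simp add: field_simps power2_eq_square)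
  also have "\<dots> = 0" using d2 by simp
  finally show ?thesis by blast
qed

lemma rank1:
  assumes "det2 M = 0" "\<not> (\<forall>a<2. \<forall>b<2. M a b = 0)"
  shows "\<exists>al ga. nz al \<and> nz ga \<and> (\<forall>a<2. \<forall>b<2. M a b = al a * ga b)"
proof -
  have d: "M 0 0 * M 1 1 = M 0 1 * M 1 0" using assms(1) by (simp add: det2_def)
  have nzM: "M 0 0 \<noteq> 0 \<or> M 0 1 \<noteq> 0 \<or> M 1 0 \<noteq> 0 \<or> M 1 1 \<noteq> 0" using assms(2) by (auto simp: all2)
  show ?thesis
  proof (cases "M 0 0 \<noteq> 0")
    case True
    show ?thesis
      apply (rule exI[of _ "vec2 1 (M 1 0 / M 0 0)"], rule exI[of _ "vec2 (M 0 0) (M 0 1)"])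
      using True d by (auto simp: all2 nz_def field_simps)
  next
    case f0: False
    show ?thesis
    proof (cases "M 0 1 \<noteq> 0")
      case True
      show ?thesis
        apply (rule exI[of _ "vec2 1 (M 1 1 / M 0 1)"], rule exI[of _ "vec2 (M 0 0) (M 0 1)"])
        using True f0 d by (auto simp: all2 nz_def field_simps)
    next
      case False
      show ?thesis
        apply (rule exI[of _ "vec2 0 1"], rule exI[of _ "vec2 (M 1 0) (M 1 1)"])
        using False f0 nzM by (auto simp: all2 nz_def)
    qed
  qed
qed

lemma decomp:
  assumes "nz al" "nz ga"
    and lam: "al 1 * ga 1 * M 0 0 - al 1 * ga 0 * M 0 1 - al 0 * ga 1 * M 1 0 + al 0 * ga 0 * M 1 1 = 0"
  shows "\<exists>g h. \<forall>a<2. \<forall>b<2. M a b = al a * g b + h a * ga b"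
proof -
  consider "al 0 \<noteq> 0" "ga 0 \<noteq> 0" | "al 0 \<noteq> 0" "ga 1 \<noteq> 0" | "al 1 \<noteq> 0" "ga 0 \<noteq> 0" | "al 1 \<noteq> 0" "ga 1 \<noteq> 0"
    using assms(1,2) unfolding nz_def by blast
  then show ?thesis
  proof cases
    case 1
    have e: "M 1 1 = (- al 1 * ga 1 * M 0 0 + al 1 * ga 0 * M 0 1 + al 0 * ga 1 * M 1 0) / (al 0 * ga 0)"
      using 1 lam by (simp add: field_simps; (simp add: algebra_simps)?)
    show ?thesis
      apply (rule exI[of _ "vec2 (M 0 0 / al 0) (M 0 1 / al 0)"], rule exI[of _ "vec2 0 ((M 1 0 - al 1 * M 0 0 / al 0) / ga 0)"])
      using 1 by (simp add: all2 e e[unfolded One_nat_def] field_simps; (simp add: algebra_simps)?)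
  next
    case 2
    have e: "M 1 0 = (al 1 * ga 1 * M 0 0 - al 1 * ga 0 * M 0 1 + al 0 * ga 0 * M 1 1) / (al 0 * ga 1)"
      using 2 lam by (simp add: field_simps; (simp add: algebra_simps)?)
    show ?thesis
      apply (rule exI[of _ "vec2 (M 0 0 / al 0) (M 0 1 / al 0)"], rule exI[of _ "vec2 0 ((M 1 1 - al 1 * M 0 1 / al 0) / ga 1)"])
      using 2 by (simp add: all2 e e[unfolded One_nat_def] field_simps; (simp add: algebra_simps)?)
  next
    case 3
    have e: "M 0 1 = (al 1 * ga 1 * M 0 0 - al 0 * ga 1 * M 1 0 + al 0 * ga 0 * M 1 1) / (al 1 * ga 0)"
      using 3 lam by (simp add: field_simps; (simp add: algebra_simps)?)
    show ?thesis
      apply (rule exI[of _ "vec2 (M 1 0 / al 1) (M 1 1 / al 1)"], rule exI[of _ "vec2 ((M 0 0 - al 0 * M 1 0 / al 1) / ga 0) 0"])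
      using 3 by (simp add: all2 e e[unfolded One_nat_def] field_simps; (simp add: algebra_simps)?)
  next
    case 4
    have e: "M 0 0 = (al 1 * ga 0 * M 0 1 + al 0 * ga 1 * M 1 0 - al 0 * ga 0 * M 1 1) / (al 1 * ga 1)"
      using 4 lam by (simp add: field_simps; (simp add: algebra_simps)?)
    show ?thesis
      apply (rule exI[of _ "vec2 (M 1 0 / al 1) (M 1 1 / al 1)"], rule exI[of _ "vec2 ((M 0 1 - al 0 * M 1 1 / al 1) / ga 1) 0"])
      using 4 by (simp add: all2 e e[unfolded One_nat_def] field_simps; (simp add: algebra_simps)?)
  qed
qed

lemma kerex_all: "kerex T A B"
proof -
  obtain y1 where y1: "nz y1" "det2 (TY T y1) = 0"
  proof (cases "det2 (T 0) = 0")
    case True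
    have "det2 (TY T (vec2 1 0)) = det2 (T 0)" by (simp add: TY_def det2_def)
    then show ?thesis using that[of "vec2 1 0"] True by (simp add: nz_def)
  next
    case False
    define m where "m = T 0 0 0 * T 1 1 1 + T 1 0 0 * T 0 1 1 - T 0 0 1 * T 1 1 0 - T 1 0 1 * T 0 1 0"
    obtain t where t: "det2 (T 0) * t^2 + m * t + det2 (T 1) = 0" using quad_root[OF False] by blast
    have "det2 (TY T (vec2 t 1)) = det2 (T 0) * t^2 + m * t + det2 (T 1)"
      by (simp add: TY_def det2_def m_def power2_eq_square algebra_simps)
    then show ?thesis using that[of "vec2 t 1"] t by (simp add: nz_def)
  qed
  show ?thesis
  proof (cases "\<forall>a<2. \<forall>b<2. TY T y1 a b = 0")
    case True
    then show ?thesis using kerD[OF y1(1)] by blast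
  next
    case False
    obtain al ga where alga: "nz al" "nz ga" and fac: "\<forall>a<2. \<forall>b<2. TY T y1 a b = al a * ga b"
      using rank1[OF y1(2) False] by blast
    define y2 where "y2 = (if y1 0 \<noteq> 0 then vec2 0 1 else vec2 1 0)"
    have dy: "y1 0 * y2 1 - y1 1 * y2 0 \<noteq> 0" using y1(1) by (auto simp: y2_def nz_def)
    define M where "M = TY T y2"
    define lam where "lam = al 1 * ga 1 * M 0 0 - al 1 * ga 0 * M 0 1 - al 0 * ga 1 * M 1 0 + al 0 * ga 0 * M 1 1"
    show ?thesis
    proof (cases "lam = 0")
      case True
      then obtain g h where gh: "\<forall>a<2. \<forall>b<2. M a b = al a * g b + h a * ga b"
        using decomp[OF alga] unfolding lam_def by blast
      show ?thesis using kerN[OF dy fac] gh unfolding M_def by blast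
    next
      case False
      define s where "s = - det2 M / lam"
      define y3 where "y3 = (\<lambda>i. y2 i + s * y1 i)"
      have TY3: "TY T y3 a b = M a b + s * TY T y1 a b" for a b
        by (simp add: TY_def y3_def M_def algebra_simps)
      have dy3: "y1 0 * y3 1 - y1 1 * y3 0 \<noteq> 0" using dy by (simp add: y3_def algebra_simps)
      have "det2 (TY T y3) = det2 M + s * lam"
        using fac by (simp add: det2_def TY3 lam_def all2 algebra_simps)
      also have "\<dots> = 0" using False by (simp add: s_def)
      finally have det3: "det2 (TY T y3) = 0" .
      show ?thesis
      proof (cases "\<forall>a<2. \<forall>b<2. TY T y3 a b = 0")
        case True
        have "nz y3" using dy3 by (auto simp: nz_def)
        then show ?thesis using kerD True by blast
      next
        case False
        obtain al2 ga2 where "\<forall>a<2. \<forall>b<2. TY T y3 a b = al2 a * ga2 b"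
          using rank1[OF det3 False] by blast
        then show ?thesis using kerG[OF dy3 fac] by blast
      qed
    qed
  qed
qed



lemma (in vec_space) rank_lt_kernel:
  assumes A: "A \<in> carrier_mat n nc" and v: "v \<in> carrier_vec nc" "v \<noteq> 0\<^sub>v nc" "A *\<^sub>v v = 0\<^sub>v n"
  shows "rank A < nc"
proof (rule ccontr)
  assume "\<not> rank A < nc"
  then have r: "rank A = nc" using rank_le_nc[OF A] by simp
  show False
  proof (cases "distinct (cols A)")
    case True
    then have "lin_indpt (set (cols A))" using full_rank_lin_indpt[OF A r] by blast
    then show False using lin_depI[OF A v True] by blast
  next
    case False
    obtain S where S: "maximal S (\<lambda>T. T \<subseteq> set (cols A) \<and> lin_indpt T)"
      using maximal_exists[of "(\<lambda>T. T \<subseteq> set (cols A) \<and> lin_indpt T)" "card (set (cols A))" "{}"]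
      by (meson List.finite_set card_mono empty_iff empty_subsetI finite_lin_indpt2 rev_finite_subset)
    then have "card S \<le> card (set (cols A))" by (simp add: card_mono maximal_def)
    moreover have "card (set (cols A)) < length (cols A)"
      using False card_distinct card_length le_neq_implies_less by blast
    moreover have "length (cols A) = nc" using A by simp
    ultimately have "card S < nc" by linarith
    then show False using rank_card_indpt[OF A S] r by simp
  qed
qed

lemma enum_set_props:
  assumes "finite A"
  shows "set (enum_set A) = A" "distinct (enum_set A)"
proof -
  have "\<exists>xs. set xs = A \<and> distinct xs" using finite_distinct_list[OF assms] .
  then have "set (enum_set A) = A \<and> distinct (enum_set A)"
    unfolding enum_set_def by (rule someI_ex)
  then show "set (enum_set A) = A" "distinct (enum_set A)" by auto
qed

lemma sum_nth_distinct:
  assumes "distinct xs"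
  shows "(\<Sum>c<length xs. g (xs ! c)) = sum g (set xs)"
proof -
  have "(\<Sum>c<length xs. g (xs ! c)) = (\<Sum>c = 0..<length xs. map g xs ! c)"
    by (simp add: atLeast0LessThan)
  also have "\<dots> = sum_list (map g xs)" by (simp add: sum_list_sum_nth)
  also have "\<dots> = sum g (set xs)" using assms by (simp add: sum_list_distinct_conv_sum_set)
  finally show ?thesis .
qed

lemma edge_UNIV: "(UNIV::edge set) = {e_s2v1, e_v1v2, e_v1v3, e_s1v2, e_v2t1, e_s3v3, e_v3t2}"
  apply (rule UNIV_eq_I)
  apply (case_tac x)
  apply auto
  done

lemma inc_s1: "incident ex_E ex_ends s1 = {e_s1v2}"
  by (auto simp: incident_def ex_E_def edge_UNIV)
lemma inc_s2: "incident ex_E ex_ends s2 = {e_s2v1}"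
  by (auto simp: incident_def ex_E_def edge_UNIV)
lemma inc_s3: "incident ex_E ex_ends s3 = {e_s3v3}"
  by (auto simp: incident_def ex_E_def edge_UNIV)
lemma inc_t1: "incident ex_E ex_ends t1 = {e_v2t1}"
  by (auto simp: incident_def ex_E_def edge_UNIV)
lemma inc_t2: "incident ex_E ex_ends t2 = {e_v3t2}"
  by (auto simp: incident_def ex_E_def edge_UNIV)
lemma inc_v1: "incident ex_E ex_ends v1 = {e_s2v1, e_v1v2, e_v1v3}"
  by (auto simp: incident_def ex_E_def edge_UNIV)
lemma inc_v2: "incident ex_E ex_ends v2 = {e_v1v2, e_s1v2, e_v2t1}"
  by (auto simp: incident_def ex_E_def edge_UNIV)
lemma inc_v3: "incident ex_E ex_ends v3 = {e_v1v3, e_s3v3, e_v3t2}"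
  by (auto simp: incident_def ex_E_def edge_UNIV)

lemma SE: "end_edges ex_E ex_ends ex_S = {e_s1v2, e_s2v1, e_s3v3}"
  by (auto simp: end_edges_def ex_S_def inc_s1 inc_s2 inc_s3)
lemma TE: "end_edges ex_E ex_ends ex_T = {e_v2t1, e_v3t2}"
  by (auto simp: end_edges_def ex_T_def inc_t1 inc_t2)

definition mkS :: "nat \<Rightarrow> nat \<Rightarrow> nat \<Rightarrow> edge \<Rightarrow> nat" where
  "mkS i j k = (\<lambda>e. if e = e_s1v2 then i else if e = e_s2v1 then j else if e = e_s3v3 then k else undefined)"
definition mkT :: "nat \<Rightarrow> nat \<Rightarrow> edge \<Rightarrow> nat" where
  "mkT u1 u2 = (\<lambda>e. if e = e_v2t1 then u1 else if e = e_v3t2 then u2 else undefined)"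

abbreviation "SA \<equiv> assignments {e_s1v2, e_s2v1, e_s3v3} ex_cap"
abbreviation "TA \<equiv> assignments {e_v2t1, e_v3t2} ex_cap"

lemma SA_img: "SA = (\<lambda>(i,j,k). mkS i j k) ` ({..<2} \<times> {..<2} \<times> {..<2})"
proof (intro equalityI subsetI)
  fix f assume f: "f \<in> SA"
  then have "f = mkS (f e_s1v2) (f e_s2v1) (f e_s3v3)"
    unfolding assignments_def mkS_def by (intro ext) (auto simp: PiE_def extensional_def)
  moreover have "f e_s1v2 < 2" "f e_s2v1 < 2" "f e_s3v3 < 2" using f by (auto simp: assignments_def PiE_def)
  ultimately show "f \<in> (\<lambda>(i,j,k). mkS i j k) ` ({..<2} \<times> {..<2} \<times> {..<2})" by force
next
  fix f assume "f \<in> (\<lambda>(i,j,k). mkS i j k) ` ({..<2} \<times> {..<2} \<times> {..<2})"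
  then show "f \<in> SA" by (auto simp: assignments_def mkS_def PiE_def extensional_def)
qed

lemma SA_inj: "inj_on (\<lambda>(i,j,k). mkS i j k) X"
proof (rule inj_onI)
  fix x y :: "nat \<times> nat \<times> nat"
  assume h: "(\<lambda>(i,j,k). mkS i j k) x = (\<lambda>(i,j,k). mkS i j k) y"
  obtain i j k where x: "x = (i,j,k)" using prod_cases3 by blast
  obtain i' j' k' where y: "y = (i',j',k')" using prod_cases3 by blast
  from h have e: "mkS i j k = mkS i' j' k'" by (simp add: x y)
  have "mkS i j k e_s1v2 = mkS i' j' k' e_s1v2" "mkS i j k e_s2v1 = mkS i' j' k' e_s2v1"
    "mkS i j k e_s3v3 = mkS i' j' k' e_s3v3" by (simp_all only: e)
  then show "x = y" using x y by (simp add: mkS_def)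
qed

lemma sum_SA: "sum F SA = (\<Sum>i<2. \<Sum>j<2. \<Sum>k<2. F (mkS i j k))"
proof -
  have "sum F SA = (\<Sum>x\<in>{..<2} \<times> {..<2} \<times> {..<2}. F ((\<lambda>(i,j,k). mkS i j k) x))"
    unfolding SA_img by (rule sum.reindex[OF SA_inj, unfolded comp_def])
  also have "\<dots> = (\<Sum>i<2. \<Sum>j<2. \<Sum>k<2. F (mkS i j k))"
    by (simp add: sum.cartesian_product')
  finally show ?thesis .
qed

lemma TA_img: "TA = (\<lambda>(u1,u2). mkT u1 u2) ` ({..<3} \<times> {..<3})"
proof (intro equalityI subsetI)
  fix f assume f: "f \<in> TA"
  then have "f = mkT (f e_v2t1) (f e_v3t2)"
    unfolding assignments_def mkT_def by (intro ext) (auto simp: PiE_def extensional_def)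
  moreover have "f e_v2t1 < 3" "f e_v3t2 < 3" using f by (auto simp: assignments_def PiE_def)
  ultimately show "f \<in> (\<lambda>(u1,u2). mkT u1 u2) ` ({..<3} \<times> {..<3})" by force
next
  fix f assume "f \<in> (\<lambda>(u1,u2). mkT u1 u2) ` ({..<3} \<times> {..<3})"
  then show "f \<in> TA" by (auto simp: assignments_def mkT_def PiE_def extensional_def)
qed

lemma finite_SA: "finite SA" and finite_TA: "finite TA"
  by (simp_all add: assignments_def finite_PiE)

lemma card_SA: "card SA = 8" and card_TA: "card TA = 9"
  by (simp_all add: assignments_def card_PiE)

definition Wf :: "nat \<Rightarrow> nat \<Rightarrow> nat \<Rightarrow> nat \<Rightarrow> nat \<Rightarrow> nat \<Rightarrow> nat \<Rightarrow> edge \<Rightarrow> nat" where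
  "Wf i j k u1 u2 a b = (\<lambda>e. case e of e_s2v1 \<Rightarrow> j | e_v1v2 \<Rightarrow> a | e_v1v3 \<Rightarrow> b | e_s1v2 \<Rightarrow> i
      | e_v2t1 \<Rightarrow> u1 | e_s3v3 \<Rightarrow> k | e_v3t2 \<Rightarrow> u2)"

definition TT :: "(node \<Rightarrow> (edge \<Rightarrow> nat) \<Rightarrow> complex) \<Rightarrow> t3" where
  "TT Tn j a b = Tn v1 (restrict (Wf 0 j 0 0 0 a b) {e_s2v1, e_v1v2, e_v1v3})"
definition AA :: "(node \<Rightarrow> (edge \<Rightarrow> nat) \<Rightarrow> complex) \<Rightarrow> t3" where
  "AA Tn a i u = Tn v2 (restrict (Wf i 0 0 u 0 a 0) {e_v1v2, e_s1v2, e_v2t1})"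
definition BB :: "(node \<Rightarrow> (edge \<Rightarrow> nat) \<Rightarrow> complex) \<Rightarrow> t3" where
  "BB Tn b k u = Tn v3 (restrict (Wf 0 0 k 0 u 0 b) {e_v1v3, e_s3v3, e_v3t2})"

lemma Wset:
  assumes "i < 2" "j < 2" "k < 2" "u1 < 3" "u2 < 3"
  shows "{W \<in> assignments ex_E ex_cap. restrict W {e_s1v2, e_s2v1, e_s3v3} = mkS i j k
            \<and> restrict W {e_v2t1, e_v3t2} = mkT u1 u2}
        = (\<lambda>(a,b). Wf i j k u1 u2 a b) ` ({..<2} \<times> {..<2})"
proof (intro equalityI subsetI)
  fix W assume "W \<in> {W \<in> assignments ex_E ex_cap. restrict W {e_s1v2, e_s2v1, e_s3v3} = mkS i j k
            \<and> restrict W {e_v2t1, e_v3t2} = mkT u1 u2}"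
  then have W: "W \<in> assignments ex_E ex_cap" and r1: "restrict W {e_s1v2, e_s2v1, e_s3v3} = mkS i j k"
    and r2: "restrict W {e_v2t1, e_v3t2} = mkT u1 u2" by auto
  have "restrict W {e_s1v2, e_s2v1, e_s3v3} e_s1v2 = mkS i j k e_s1v2"
       "restrict W {e_s1v2, e_s2v1, e_s3v3} e_s2v1 = mkS i j k e_s2v1"
       "restrict W {e_s1v2, e_s2v1, e_s3v3} e_s3v3 = mkS i j k e_s3v3"
       "restrict W {e_v2t1, e_v3t2} e_v2t1 = mkT u1 u2 e_v2t1"
       "restrict W {e_v2t1, e_v3t2} e_v3t2 = mkT u1 u2 e_v3t2"
    by (simp_all only: r1 r2)
  then have v: "W e_s1v2 = i" "W e_s2v1 = j" "W e_s3v3 = k" "W e_v2t1 = u1" "W e_v3t2 = u2"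
    by (simp_all add: mkS_def mkT_def)
  have "W = Wf i j k u1 u2 (W e_v1v2) (W e_v1v3)"
    by (rule ext, case_tac x) (simp_all add: Wf_def v)
  moreover have "\<forall>e. W e < ex_cap e" using W by (auto simp: assignments_def ex_E_def PiE_iff)
  then have "W e_v1v2 < 2" "W e_v1v3 < 2" by (metis ex_cap.simps(2), metis ex_cap.simps(3))
  ultimately show "W \<in> (\<lambda>(a,b). Wf i j k u1 u2 a b) ` ({..<2} \<times> {..<2})" by force
next
  fix W assume "W \<in> (\<lambda>(a,b). Wf i j k u1 u2 a b) ` ({..<2} \<times> {..<2})"
  then obtain a b where ab: "a < 2" "b < 2" and W: "W = Wf i j k u1 u2 a b" by auto
  have "W \<in> assignments ex_E ex_cap"
    unfolding assignments_def ex_E_def W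
    by (auto simp: PiE_def Wf_def assms ab split: edge.splits)
  moreover have "restrict W {e_s1v2, e_s2v1, e_s3v3} = mkS i j k"
    by (rule ext) (auto simp: W Wf_def mkS_def)
  moreover have "restrict W {e_v2t1, e_v3t2} = mkT u1 u2"
    by (rule ext) (auto simp: W Wf_def mkT_def)
  ultimately show "W \<in> {W \<in> assignments ex_E ex_cap. restrict W {e_s1v2, e_s2v1, e_s3v3} = mkS i j k
            \<and> restrict W {e_v2t1, e_v3t2} = mkT u1 u2}" by blast
qed

lemma Wf_inj: "inj_on (\<lambda>(a,b). Wf i j k u1 u2 a b) X"
proof (rule inj_onI)
  fix x y :: "nat \<times> nat"
  assume h: "(\<lambda>(a,b). Wf i j k u1 u2 a b) x = (\<lambda>(a,b). Wf i j k u1 u2 a b) y"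
  obtain a b where x: "x = (a,b)" by (cases x)
  obtain a' b' where y: "y = (a',b')" by (cases y)
  from h have e: "Wf i j k u1 u2 a b = Wf i j k u1 u2 a' b'" by (simp add: x y)
  have "Wf i j k u1 u2 a b e_v1v2 = Wf i j k u1 u2 a' b' e_v1v2"
       "Wf i j k u1 u2 a b e_v1v3 = Wf i j k u1 u2 a' b' e_v1v3" by (simp_all only: e)
  then show "x = y" using x y by (simp add: Wf_def)
qed

lemma contr:
  assumes "i < 2" "j < 2" "k < 2" "u1 < 3" "u2 < 3"
  shows "contraction ex_S ex_T ex_V ex_E ex_ends ex_cap Tn (mkT u1 u2) (mkS i j k)
     = (\<Sum>a<2. \<Sum>b<2. TT Tn j a b * AA Tn a i u1 * BB Tn b k u2)"
proof -
  have r: "restrict (Wf i j k u1 u2 a b) {e_s2v1, e_v1v2, e_v1v3} = restrict (Wf 0 j 0 0 0 a b) {e_s2v1, e_v1v2, e_v1v3}"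
          "restrict (Wf i j k u1 u2 a b) {e_v1v2, e_s1v2, e_v2t1} = restrict (Wf i 0 0 u1 0 a 0) {e_v1v2, e_s1v2, e_v2t1}"
          "restrict (Wf i j k u1 u2 a b) {e_v1v3, e_s3v3, e_v3t2} = restrict (Wf 0 0 k 0 u2 0 b) {e_v1v3, e_s3v3, e_v3t2}"
    for a b by (rule ext, simp add: Wf_def)+
  have "contraction ex_S ex_T ex_V ex_E ex_ends ex_cap Tn (mkT u1 u2) (mkS i j k)
      = (\<Sum>W\<in>(\<lambda>(a,b). Wf i j k u1 u2 a b) ` ({..<2} \<times> {..<2}).
           \<Prod>v\<in>{v1,v2,v3}. Tn v (restrict W (incident ex_E ex_ends v)))"
    unfolding contraction_def SE TE Wset[OF assms] ex_V_def ..
  also have "\<dots> = (\<Sum>x\<in>{..<2} \<times> {..<2}. \<Prod>v\<in>{v1,v2,v3}. Tn v (restrict ((\<lambda>(a,b). Wf i j k u1 u2 a b) x) (incident ex_E ex_ends v)))"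
    by (rule sum.reindex[OF Wf_inj, unfolded comp_def])
  also have "\<dots> = (\<Sum>a<2. \<Sum>b<2. TT Tn j a b * AA Tn a i u1 * BB Tn b k u2)"
    by (simp add: sum.cartesian_product' inc_v1 inc_v2 inc_v3 r TT_def AA_def BB_def mult.assoc)
  finally show ?thesis .
qed

lemma mkS_app[simp]: "mkS i j k e_s1v2 = i" "mkS i j k e_s2v1 = j" "mkS i j k e_s3v3 = k"
  by (simp_all add: mkS_def)

lemma SA_TA_enum:
  "set (enum_set SA) = SA" "distinct (enum_set SA)" "length (enum_set SA) = 8"
  "set (enum_set TA) = TA" "distinct (enum_set TA)" "length (enum_set TA) = 9"
  using enum_set_props[OF finite_SA] enum_set_props[OF finite_TA] card_SA card_TA
  by (metis distinct_card)+

lemma rank_le7: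
  "set_mat_rank TA SA (contraction ex_S ex_T ex_V ex_E ex_ends ex_cap Tn) \<le> 7"
proof -
  define rs where "rs = enum_set TA"
  define cs where "cs = enum_set SA"
  note e = SA_TA_enum[folded rs_def cs_def]
  define C where "C = contraction ex_S ex_T ex_V ex_E ex_ends ex_cap Tn"
  define Mt where "Mt = mat (length rs) (length cs) (\<lambda>(i, j). C (rs ! i) (cs ! j))"
  obtain X where X: "\<exists>i<2. \<exists>j<2. \<exists>k<2. X i j k \<noteq> 0"
     and kX: "\<forall>u1<3. \<forall>u2<3. betaX (TT Tn) (AA Tn) (BB Tn) X u1 u2 = 0"
    using kerex_all unfolding kerex_def by blast
  define v where "v = vec (length cs) (\<lambda>c. X ((cs!c) e_s1v2) ((cs!c) e_s2v1) ((cs!c) e_s3v3))"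
  have Mc: "Mt \<in> carrier_mat (length rs) (length cs)" unfolding Mt_def by simp
  have vc: "v \<in> carrier_vec (length cs)" unfolding v_def by simp
  have vnz: "v \<noteq> 0\<^sub>v (length cs)"
  proof
    assume v0: "v = 0\<^sub>v (length cs)"
    obtain i j k where ijk: "i < 2" "j < 2" "k < 2" "X i j k \<noteq> 0" using X by blast
    have "mkS i j k \<in> (\<lambda>(i,j,k). mkS i j k) ` ({..<2} \<times> {..<2} \<times> {..<2})"
      using ijk by (intro image_eqI[of _ _ "(i,j,k)"]) auto
    then have "mkS i j k \<in> set cs" using e(1) unfolding SA_img by simp
    then obtain c where c: "c < length cs" "cs ! c = mkS i j k" by (metis in_set_conv_nth)
    have "v $ c = X i j k" using c by (simp add: v_def)
    then show False using v0 c ijk by simp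
  qed
  have "Mt *\<^sub>v v = 0\<^sub>v (length rs)"
  proof (rule eq_vecI)
    show "dim_vec (Mt *\<^sub>v v) = dim_vec (0\<^sub>v (length rs))" using Mc by simp
    fix r assume "r < dim_vec (0\<^sub>v (length rs))"
    then have r: "r < length rs" by simp
    then have "rs ! r \<in> TA" using e(4) nth_mem by blast
    then obtain u1 u2 where u: "u1 < 3" "u2 < 3" "rs ! r = mkT u1 u2" unfolding TA_img by auto
    have "(Mt *\<^sub>v v) $ r = (\<Sum>c<length cs. C (rs ! r) (cs ! c) * X ((cs!c) e_s1v2) ((cs!c) e_s2v1) ((cs!c) e_s3v3))"
      using r by (simp add: Mt_def v_def scalar_prod_def atLeast0LessThan)
    also have "\<dots> = (\<Sum>f\<in>SA. C (rs ! r) f * X (f e_s1v2) (f e_s2v1) (f e_s3v3))"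
      using sum_nth_distinct[OF e(2), of "\<lambda>f. C (rs ! r) f * X (f e_s1v2) (f e_s2v1) (f e_s3v3)"] e(1) by simp
    also have "\<dots> = (\<Sum>i<2. \<Sum>j<2. \<Sum>k<2. C (mkT u1 u2) (mkS i j k) * X i j k)"
      unfolding sum_SA u(3) by simp
    also have "\<dots> = betaX (TT Tn) (AA Tn) (BB Tn) X u1 u2"
      unfolding betaX_def C_def using u(1,2) by (simp add: sum2 contr)
    also have "\<dots> = 0" using kX u by blast
    finally show "(Mt *\<^sub>v v) $ r = 0\<^sub>v (length rs) $ r" using r by simp
  qed
  then have "vec_space.rank (length rs) Mt < length cs"
    using vec_space.rank_lt_kernel[OF Mc vc vnz] by blast
  then show ?thesis unfolding set_mat_rank_def Let_def rs_def[symmetric] cs_def[symmetric] Mt_def C_def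
    using e(3) by simp
qed

definition Tn0 :: "node \<Rightarrow> (edge \<Rightarrow> nat) \<Rightarrow> complex" where
  "Tn0 v W = (case v of v1 \<Rightarrow> (if W e_s2v1 = W e_v1v2 \<and> W e_s2v1 = W e_v1v3 then 1 else 0)
     | v2 \<Rightarrow> (if W e_v2t1 = W e_s1v2 + W e_v1v2 then 1 else 0)
     | v3 \<Rightarrow> (if W e_v3t2 = W e_s3v3 + W e_v1v3 then 1 else 0) | _ \<Rightarrow> 0)"

lemma contr0:
  assumes "i < 2" "j < 2" "k < 2" "u1 < 3" "u2 < 3"
  shows "contraction ex_S ex_T ex_V ex_E ex_ends ex_cap Tn0 (mkT u1 u2) (mkS i j k)
     = (if u1 = i + j \<and> u2 = k + j then 1 else 0)"
proof -
  have j: "j = 0 \<or> j = 1" using assms(2) by auto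
  show ?thesis unfolding contr[OF assms]
    using j by (auto simp: sum2 TT_def AA_def BB_def Tn0_def Wf_def)
qed

definition "c1 j = [0,0,1,1,0,1,1::nat] ! j"
definition "c2 j = [0,0,0,0,1,1,1::nat] ! j"
definition "c3 j = [0,1,0,1,1,0,1::nat] ! j"

lemma cases7: "(j::nat) < 7 \<Longrightarrow> j = 0 \<or> j = 1 \<or> j = 2 \<or> j = 3 \<or> j = 4 \<or> j = 5 \<or> j = 6"
  by (auto simp: eval_nat_numeral less_Suc_eq)

lemma cbounds: "j < 7 \<Longrightarrow> c1 j < 2 \<and> c2 j < 2 \<and> c3 j < 2 \<and> c1 j + c2 j < 3 \<and> c3 j + c2 j < 3"
  by (drule cases7) (auto simp: c1_def c2_def c3_def)

lemma ckey: "j < 7 \<Longrightarrow> j' < 7 \<Longrightarrow>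
   (c1 j + c2 j = c1 j' + c2 j' \<and> c3 j + c2 j = c3 j' + c2 j') = (j = j')"
  by (drule cases7, drule cases7) (auto simp: c1_def c2_def c3_def)

lemma rank_ge7:
  "7 \<le> set_mat_rank TA SA (contraction ex_S ex_T ex_V ex_E ex_ends ex_cap Tn0)"
proof -
  define rs where "rs = enum_set TA"
  define cs where "cs = enum_set SA"
  note e = SA_TA_enum[folded rs_def cs_def]
  define C where "C = contraction ex_S ex_T ex_V ex_E ex_ends ex_cap Tn0"
  define Mt where "Mt = mat (length rs) (length cs) (\<lambda>(i, j). C (rs ! i) (cs ! j))"
  have Mc: "Mt \<in> carrier_mat (length rs) (length cs)" unfolding Mt_def by simp
  have "\<forall>j. \<exists>c. j < 7 \<longrightarrow> c < length cs \<and> cs ! c = mkS (c1 j) (c2 j) (c3 j)"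
  proof (intro allI)
    fix j show "\<exists>c. j < 7 \<longrightarrow> c < length cs \<and> cs ! c = mkS (c1 j) (c2 j) (c3 j)"
    proof (cases "j < 7")
      case True
      have "mkS (c1 j) (c2 j) (c3 j) \<in> (\<lambda>(i,j,k). mkS i j k) ` ({..<2} \<times> {..<2} \<times> {..<2})"
        using cbounds[OF True] by (intro image_eqI[of _ _ "(c1 j, c2 j, c3 j)"]) auto
      then have "mkS (c1 j) (c2 j) (c3 j) \<in> set cs" using e(1) unfolding SA_img by simp
      then show ?thesis by (metis in_set_conv_nth)
    qed auto
  qed
  from choice[OF this] obtain cidx where cidx: "\<And>j. j < 7 \<Longrightarrow> cidx j < length cs \<and> cs ! cidx j = mkS (c1 j) (c2 j) (c3 j)"
    by blast
  have "\<forall>j. \<exists>r. j < 7 \<longrightarrow> r < length rs \<and> rs ! r = mkT (c1 j + c2 j) (c3 j + c2 j)"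
  proof (intro allI)
    fix j show "\<exists>r. j < 7 \<longrightarrow> r < length rs \<and> rs ! r = mkT (c1 j + c2 j) (c3 j + c2 j)"
    proof (cases "j < 7")
      case True
      have "mkT (c1 j + c2 j) (c3 j + c2 j) \<in> (\<lambda>(u1,u2). mkT u1 u2) ` ({..<3} \<times> {..<3})"
        using cbounds[OF True] by (intro image_eqI[of _ _ "(c1 j + c2 j, c3 j + c2 j)"]) auto
      then have "mkT (c1 j + c2 j) (c3 j + c2 j) \<in> set rs" using e(4) unfolding TA_img by simp
      then show ?thesis by (metis in_set_conv_nth)
    qed auto
  qed
  from choice[OF this] obtain ridx where ridx: "\<And>j. j < 7 \<Longrightarrow> ridx j < length rs \<and> rs ! ridx j = mkT (c1 j + c2 j) (c3 j + c2 j)"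
    by blast
  define B where "B = mat (length rs) 7 (\<lambda>(r, j). Mt $$ (r, cidx j))"
  have Bc: "B \<in> carrier_mat (length rs) 7" unfolding B_def by simp
  have Bent: "B $$ (ridx j, j') = (if j = j' then 1 else 0)" if j: "j < 7" "j' < 7" for j j'
  proof -
    have "B $$ (ridx j, j') = C (mkT (c1 j + c2 j) (c3 j + c2 j)) (mkS (c1 j') (c2 j') (c3 j'))"
      using ridx[OF j(1)] cidx[OF j(2)] j by (simp add: B_def Mt_def)
    also have "\<dots> = (if j = j' then 1 else 0)"
      unfolding C_def using cbounds[OF j(1)] cbounds[OF j(2)] ckey[OF j]
      by (simp add: contr0)
    finally show ?thesis .
  qed
  have colB: "col B j = col Mt (cidx j)" if "j < 7" for j
    using that cidx[OF that] by (intro eq_vecI) (auto simp: B_def Mt_def)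
  have dist: "distinct (cols B)"
  proof (rule distinct_conv_nth[THEN iffD2], intro allI impI)
    fix j j' assume j: "j < length (cols B)" "j' < length (cols B)" "j \<noteq> j'"
    then have j7: "j < 7" "j' < 7" using Bc by auto
    show "cols B ! j \<noteq> cols B ! j'"
    proof
      assume "cols B ! j = cols B ! j'"
      then have "col B j = col B j'" using j7 Bc by simp
      then have "col B j $ ridx j = col B j' $ ridx j" by simp
      then have "B $$ (ridx j, j) = B $$ (ridx j, j')" using ridx[OF j7(1)] Bc j7 by simp
      then show False using Bent[OF j7(1) j7(1)] Bent[OF j7] j(3) by simp
    qed
  qed
  have indpt: "LinearCombinations.module.lin_indpt class_ring (module_vec TYPE(complex) (length rs)) (set (cols B))"
  proof
    assume "LinearCombinations.module.lin_dep class_ring (module_vec TYPE(complex) (length rs)) (set (cols B))"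
    then obtain w where w: "w \<in> carrier_vec 7" "w \<noteq> 0\<^sub>v 7" "B *\<^sub>v w = 0\<^sub>v (length rs)"
      using vec_space.lin_depE[OF Bc _ dist] by blast
    obtain j where j: "j < 7" "w $ j \<noteq> 0"
    proof (rule ccontr)
      assume "\<not> thesis"
      then have "\<forall>j<7. w $ j = 0" using that by blast
      then have "w = 0\<^sub>v 7" using w(1) by (intro eq_vecI) auto
      then show False using w(2) by simp
    qed
    have "(B *\<^sub>v w) $ ridx j = (\<Sum>j'<7. B $$ (ridx j, j') * w $ j')"
      using ridx[OF j(1)] Bc w(1) by (simp add: scalar_prod_def atLeast0LessThan)
    also have "\<dots> = (\<Sum>j'<7. if j = j' then w $ j' else 0)"
      by (rule sum.cong) (auto simp: Bent[OF j(1)])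
    also have "\<dots> = w $ j" using j(1) by simp
    finally have "(B *\<^sub>v w) $ ridx j = w $ j" .
    then show False using w(3) j ridx[OF j(1)] by simp
  qed
  have sub: "set (cols B) \<subseteq> set (cols Mt)"
  proof
    fix x assume "x \<in> set (cols B)"
    then obtain j where j: "j < 7" "x = col B j" using Bc by (auto simp: in_set_conv_nth)
    then have "x = col Mt (cidx j)" using colB by simp
    then show "x \<in> set (cols Mt)" using cidx[OF j(1)] Mc by (auto simp: in_set_conv_nth intro!: exI[of _ "cidx j"])
  qed
  have "card (set (cols B)) = 7" using distinct_card[OF dist] Bc by simp
  then have "7 \<le> vec_space.rank (length rs) Mt"
    using vec_space.rank_ge_card_indpt[OF Mc sub indpt] by simp
  then show ?thesis unfolding set_mat_rank_def Let_def rs_def[symmetric] cs_def[symmetric] Mt_def C_def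
    by simp
qed

lemma QMF_eq: "QMF ex_S ex_T ex_V ex_E ex_ends ex_cap = 7"
proof -
  define R where "R = {set_mat_rank TA SA (contraction ex_S ex_T ex_V ex_E ex_ends ex_cap Tn) | Tn. True}"
  have "QMF ex_S ex_T ex_V ex_E ex_ends ex_cap = Max R" unfolding QMF_def SE TE R_def ..
  moreover have "R \<subseteq> {..7}" unfolding R_def using rank_le7 by auto
  then have "finite R" by (rule finite_subset) simp
  moreover have "7 \<in> R" unfolding R_def using rank_le7[of Tn0] rank_ge7
    by (intro CollectI exI[of _ Tn0]) simp
  moreover have "\<forall>y\<in>R. y \<le> 7" using \<open>R \<subseteq> {..7}\<close> by auto
  ultimately show ?thesis by (simp add: Max_eqI)
qed

lemma cut_ge8:
  assumes "Sb \<inter> Tb = {}" "Sb \<union> Tb = ex_S \<union> ex_T \<union> ex_V" "ex_S \<subseteq> Sb" "ex_T \<subseteq> Tb"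
  shows "8 \<le> (\<Prod>e\<in>{e \<in> ex_E. (fst (ex_ends e) \<in> Sb \<and> snd (ex_ends e) \<in> Tb) \<or>
                       (fst (ex_ends e) \<in> Tb \<and> snd (ex_ends e) \<in> Sb)}. ex_cap e)"
proof -
  have m: "s1 \<in> Sb" "s2 \<in> Sb" "s3 \<in> Sb" "t1 \<in> Tb" "t2 \<in> Tb"
    "s1 \<notin> Tb" "s2 \<notin> Tb" "s3 \<notin> Tb" "t1 \<notin> Sb" "t2 \<notin> Sb"
    "v1 \<in> Tb \<longleftrightarrow> v1 \<notin> Sb" "v2 \<in> Tb \<longleftrightarrow> v2 \<notin> Sb" "v3 \<in> Tb \<longleftrightarrow> v3 \<notin> Sb"
    using assms unfolding ex_S_def ex_T_def ex_V_def by blast+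
  show ?thesis unfolding ex_E_def edge_UNIV prod.inter_filter[OF finite.insertI[OF finite.insertI[OF finite.insertI[OF finite.insertI[OF finite.insertI[OF finite.insertI[OF finite.insertI[OF finite.emptyI]]]]]]]]
    by (cases "v1 \<in> Sb"; cases "v2 \<in> Sb"; cases "v3 \<in> Sb") (simp_all add: m)
qed

lemma QMC_eq: "QMC ex_S ex_T ex_V ex_E ex_ends ex_cap = 8"
proof -
  define R where "R = {\<Prod>e\<in>C. ex_cap e | C. C \<in> edge_cut_sets ex_S ex_T ex_V ex_E ex_ends}"
  have "QMC ex_S ex_T ex_V ex_E ex_ends ex_cap = Min R" unfolding QMC_def R_def ..
  moreover have ge: "\<forall>y\<in>R. 8 \<le> y" unfolding R_def edge_cut_sets_def using cut_ge8 by auto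
  moreover have "8 \<in> R"
  proof -
    define C0 where "C0 = {e \<in> ex_E. (fst (ex_ends e) \<in> ex_S \<and> snd (ex_ends e) \<in> ex_T \<union> ex_V) \<or>
                       (fst (ex_ends e) \<in> ex_T \<union> ex_V \<and> snd (ex_ends e) \<in> ex_S)}"
    have "C0 \<in> edge_cut_sets ex_S ex_T ex_V ex_E ex_ends"
      unfolding edge_cut_sets_def C0_def
      by (intro CollectI exI[of _ ex_S] exI[of _ "ex_T \<union> ex_V"]) (auto simp: ex_S_def ex_T_def ex_V_def)
    moreover have "C0 = {e_s2v1, e_s1v2, e_s3v3}"
      unfolding C0_def ex_E_def edge_UNIV by (auto simp: ex_S_def ex_T_def ex_V_def)
    ultimately show ?thesis unfolding R_def by force
  qed
  moreover have "finite R"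
  proof -
    have fU: "finite (UNIV :: edge set)" by (simp add: edge_UNIV)
    then have "finite (UNIV :: edge set set)" by (simp add: Finite_Set.finite_set)
    then have "finite (edge_cut_sets ex_S ex_T ex_V ex_E ex_ends)"
      using finite_subset subset_UNIV by blast
    then show ?thesis unfolding R_def by (simp add: setcompr_eq_image)
  qed
  ultimately show ?thesis by (simp add: Min_eqI)
qed

theorem mainTheorem9:
  shows "QMC ex_S ex_T ex_V ex_E ex_ends ex_cap = 8
       \<and> QMF ex_S ex_T ex_V ex_E ex_ends ex_cap = 7"
  using QMC_eq QMF_eq by simp

end
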